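(* Let $\Gamma$ be a marked graph (the core) with vertices $v_1,\dots,v_m$ and real marks $n_1,\dots,n_m$. For each $i$ let $C_{i1},\dots,C_{is_i}$ be finitely many chains $C_{ij}=[c^{ij}_1,\dots,c^{ij}_{k_{ij}}]$ ($k_{ij}\ge1$) of integers with $c^{ij}_1\ge1$ and $c^{ij}_l\ge2$ for $l\ge2$. Put $p_{ij}=|c^{ij}_1,\dots,c^{ij}_{k_{ij}}|$ and $q_{ij}=|c^{ij}_2,\dots,c^{ij}_{k_{ij}}|$ (so $p_{ij}/q_{ij}=c^{ij}_1-\cfrac{1}{c^{ij}_2-\cfrac{1}{\ddots}}$). Let $\widehat\Gamma$ be the hairy graph obtained by grafting: the mark of $v_i$ is replaced by $n_i+\sum_j c^{ij}_1$, and for each $(i,j)$ the chain $[c^{ij}_2,\dots,c^{ij}_{k_{ij}}]$ (if nonempty) is attached, with its vertex marked $c^{ij}_2$ joined to $v_i$ by a single edge. Then $$\det\widehat\Gamma=\det\Gamma\Big(n_i+\sum_j\frac{p_{ij}}{q_{ij}}\Big)\cdot\prod_{i,j}q_{ij},$$ where $\Gamma(n_i+\sum_j p_{ij}/q_{ij})$ denotes the core graph with the mark of $v_i$ replaced by $n_i+\sum_j p_{ij}/q_{ij}$. Alternatively, $$\det\widehat\Gamma=\det\widetilde\Gamma\cdot\prod_{i,j}(-p_{ij}),$$ where $\widetilde\Gamma$ is obtained from the core graph $\Gamma$ with its original marks $n_i$ by adding, for each pair $(i,j)$, one new vertex with mark $-q_{ij}/p_{ij}$ joined to $v_i$ by a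 single edge.
   Context: A marked graph is a finite graph without loops in which each vertex carries a real number (its mark); its determinant is the determinant of the matrix with the marks on the diagonal and minus the number of edges between $u$ and $v$ in the off-diagonal $(u,v)$ entry; the empty graph has determinant $1$. $|a_1,\dots,a_k|$ denotes the determinant of the chain with marks $a_1,\dots,a_k$ (tridiagonal matrix with diagonal $a_i$ and off-diagonal entries $-1$), and the empty chain has determinant $1$. *)

theory Defs
  imports "HOL-Combinatorics.Permutations" Complex_Main
begin

text \<open>A marked graph is given by a finite vertex set V, a real mark for each
vertex, and an edge-multiplicity function E (symmetric, no loops).\<close>

definition mg_matrix :: "('a \<Rightarrow> real) \<Rightarrow> ('a \<Rightarrow> 'a \<Rightarrow> nat) \<Rightarrow> 'a \<Rightarrow> 'a \<Rightarrow> real" where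
  "mg_matrix mark E u v = (if u = v then mark u else - real (E u v))"

definition mg_det :: "'a set \<Rightarrow> ('a \<Rightarrow> real) \<Rightarrow> ('a \<Rightarrow> 'a \<Rightarrow> nat) \<Rightarrow> real" where
  "mg_det V mark E =
     (\<Sum>p\<in>{p. p permutes V}. of_int (sign p) * (\<Prod>v\<in>V. mg_matrix mark E v (p v)))"

definition chain_det :: "real list \<Rightarrow> real" where
  "chain_det as = mg_det {..<length as} (\<lambda>i. as ! i)
       (\<lambda>i j. if Suc i = j \<or> Suc j = i then 1 else 0)"

text \<open>Chains attached at core vertex v: C v is the list of chains
C_{v,0},...,C_{v,s_v - 1}, each a nonempty integer list.\<close>

definition p_of :: "int list \<Rightarrow> real" where
  "p_of c = chain_det (map real_of_int c)"

definition q_of :: "int list \<Rightarrow> real" where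
  "q_of c = chain_det (map real_of_int (tl c))"

text \<open>Hairy graph: vertices Inl v (core) and Inr (v, j, l) for the l-th entry
(0-based, l \<ge> 1) of the j-th chain at v.\<close>

definition hairy_V :: "'v set \<Rightarrow> ('v \<Rightarrow> int list list) \<Rightarrow> ('v + 'v \<times> nat \<times> nat) set" where
  "hairy_V V C = Inl ` V \<union>
     {Inr (v, j, l) | v j l. v \<in> V \<and> j < length (C v) \<and> 1 \<le> l \<and> l < length (C v ! j)}"

fun hairy_mark :: "('v \<Rightarrow> real) \<Rightarrow> ('v \<Rightarrow> int list list) \<Rightarrow> ('v + 'v \<times> nat \<times> nat) \<Rightarrow> real" where
  "hairy_mark n C (Inl v) = n v + (\<Sum>j<length (C v). real_of_int (C v ! j ! 0))"
| "hairy_mark n C (Inr (v, j, l)) = real_of_int (C v ! j ! l)"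

fun hairy_E :: "('v \<Rightarrow> 'v \<Rightarrow> nat) \<Rightarrow> ('v + 'v \<times> nat \<times> nat) \<Rightarrow> ('v + 'v \<times> nat \<times> nat) \<Rightarrow> nat" where
  "hairy_E w (Inl u) (Inl v) = w u v"
| "hairy_E w (Inl u) (Inr (v, j, l)) = (if u = v \<and> l = 1 then 1 else 0)"
| "hairy_E w (Inr (v, j, l)) (Inl u) = (if u = v \<and> l = 1 then 1 else 0)"
| "hairy_E w (Inr (u, i, k)) (Inr (v, j, l)) =
     (if u = v \<and> i = j \<and> (Suc k = l \<or> Suc l = k) then 1 else 0)"

definition tilde_V :: "'v set \<Rightarrow> ('v \<Rightarrow> int list list) \<Rightarrow> ('v + 'v \<times> nat) set" where
  "tilde_V V C = Inl ` V \<union> {Inr (v, j) | v j. v \<in> V \<and> j < length (C v)}"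

fun tilde_mark :: "('v \<Rightarrow> real) \<Rightarrow> ('v \<Rightarrow> int list list) \<Rightarrow> ('v + 'v \<times> nat) \<Rightarrow> real" where
  "tilde_mark n C (Inl v) = n v"
| "tilde_mark n C (Inr (v, j)) = - q_of (C v ! j) / p_of (C v ! j)"

fun tilde_E :: "('v \<Rightarrow> 'v \<Rightarrow> nat) \<Rightarrow> ('v + 'v \<times> nat) \<Rightarrow> ('v + 'v \<times> nat) \<Rightarrow> nat" where
  "tilde_E w (Inl u) (Inl v) = w u v"
| "tilde_E w (Inl u) (Inr (v, j)) = (if u = v then 1 else 0)"
| "tilde_E w (Inr (v, j)) (Inl u) = (if u = v then 1 else 0)"
| "tilde_E w (Inr _) (Inr _) = 0"

end

theory Submission
  imports Defs
begin


definition dt :: "'a set \<Rightarrow> ('a \<Rightarrow> 'a \<Rightarrow> real) \<Rightarrow> real" where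
  "dt V A = (\<Sum>p\<in>{p. p permutes V}. of_int (sign p) * (\<Prod>v\<in>V. A v (p v)))"

lemma mg_det_dt: "mg_det V mark E = dt V (mg_matrix mark E)"
  unfolding mg_det_def dt_def ..

lemma dt_cong:
  assumes "\<And>u v. u \<in> V \<Longrightarrow> v \<in> V \<Longrightarrow> A u v = B u v"
  shows "dt V A = dt V B"
  unfolding dt_def
proof (rule sum.cong[OF refl])
  fix p assume "p \<in> {p. p permutes V}"
  then have p: "p permutes V" by simp
  have "(\<Prod>v\<in>V. A v (p v)) = (\<Prod>v\<in>V. B v (p v))"
  proof (rule prod.cong[OF refl])
    fix v assume v: "v \<in> V"
    then have "p v \<in> V" using permutes_in_image[OF p] by blast
    then show "A v (p v) = B v (p v)" using assms v by blast
  qed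
  then show "of_int (sign p) * (\<Prod>v\<in>V. A v (p v)) = of_int (sign p) * (\<Prod>v\<in>V. B v (p v))" by simp
qed

lemma permutes_fix_iff:
  "(p permutes V \<and> p y = y) \<longleftrightarrow> p permutes (V - {y})"
proof
  assume a: "p permutes V \<and> p y = y"
  show "p permutes (V - {y})"
    by (rule permutes_superset[of p V]) (use a in auto)
next
  assume a: "p permutes (V - {y})"
  have "p permutes V" by (rule permutes_subset[OF a]) blast
  moreover have "p y = y" by (rule permutes_not_in[OF a]) blast
  ultimately show "p permutes V \<and> p y = y" by blast
qed

lemma dt_split_fix:
  assumes fin: "finite V" and y: "y \<in> V"
  shows "dt V A = A y y * dt (V - {y}) A +
     (\<Sum>p\<in>{p. p permutes V \<and> p y \<noteq> y}. of_int (sign p) * (\<Prod>v\<in>V. A v (p v)))"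
proof -
  have fin2: "finite {p. p permutes V}" using fin by (rule finite_permutations)
  have eq: "{p. p permutes V} = {p. p permutes V \<and> p y = y} \<union> {p. p permutes V \<and> p y \<noteq> y}" by auto
  have "dt V A = (\<Sum>p\<in>{p. p permutes V \<and> p y = y}. of_int (sign p) * (\<Prod>v\<in>V. A v (p v)))
     + (\<Sum>p\<in>{p. p permutes V \<and> p y \<noteq> y}. of_int (sign p) * (\<Prod>v\<in>V. A v (p v)))"
  proof -
    have f1: "finite {p. p permutes V \<and> p y = y}" by (rule finite_subset[OF _ fin2]) blast
    have f2: "finite {p. p permutes V \<and> p y \<noteq> y}" by (rule finite_subset[OF _ fin2]) blast
    have d: "{p. p permutes V \<and> p y = y} \<inter> {p. p permutes V \<and> p y \<noteq> y} = {}" by blast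
    show ?thesis unfolding dt_def eq by (rule sum.union_disjoint[OF f1 f2 d])
  qed
  moreover have "(\<Sum>p\<in>{p. p permutes V \<and> p y = y}. of_int (sign p) * (\<Prod>v\<in>V. A v (p v)))
      = A y y * dt (V - {y}) A"
  proof -
    have s: "{p. p permutes V \<and> p y = y} = {p. p permutes (V - {y})}"
      by (simp only: permutes_fix_iff)
    show ?thesis unfolding s dt_def sum_distrib_left
    proof (rule sum.cong[OF refl])
      fix p assume "p \<in> {p. p permutes (V - {y})}"
      then have py: "p y = y" using permutes_fix_iff[of p V y] by simp
      have "(\<Prod>v\<in>V. A v (p v)) = A y (p y) * (\<Prod>v\<in>V - {y}. A v (p v))"
        by (rule prod.remove[OF fin y])
      then show "of_int (sign p) * (\<Prod>v\<in>V. A v (p v)) = A y y * (of_int (sign p) * (\<Prod>v\<in>V - {y}. A v (p v)))"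
        using py by simp
    qed
  qed
  ultimately show ?thesis by simp
qed

lemma dt_diag:
  assumes fin: "finite V" and y: "y \<in> V"
    and agree: "\<And>u v. u \<in> V \<Longrightarrow> v \<in> V \<Longrightarrow> (u, v) \<noteq> (y, y) \<Longrightarrow> B u v = A u v"
  shows "dt V B = dt V A + (B y y - A y y) * dt (V - {y}) A"
proof -
  have r: "(\<Sum>p\<in>{p. p permutes V \<and> p y \<noteq> y}. of_int (sign p) * (\<Prod>v\<in>V. B v (p v)))
        = (\<Sum>p\<in>{p. p permutes V \<and> p y \<noteq> y}. of_int (sign p) * (\<Prod>v\<in>V. A v (p v)))"
  proof (rule sum.cong[OF refl])
    fix p assume "p \<in> {p. p permutes V \<and> p y \<noteq> y}"
    then have p: "p permutes V" "p y \<noteq> y" by auto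
    have "(\<Prod>v\<in>V. B v (p v)) = (\<Prod>v\<in>V. A v (p v))"
    proof (rule prod.cong[OF refl])
      fix v assume v: "v \<in> V"
      then have "p v \<in> V" using permutes_in_image[OF p(1)] by blast
      moreover have "(v, p v) \<noteq> (y, y)" using p(2) by auto
      ultimately show "B v (p v) = A v (p v)" using agree v by blast
    qed
    then show "of_int (sign p) * (\<Prod>v\<in>V. B v (p v)) = of_int (sign p) * (\<Prod>v\<in>V. A v (p v))" by simp
  qed
  have d: "dt (V - {y}) B = dt (V - {y}) A"
    by (rule dt_cong) (auto intro: agree)
  show ?thesis
    using dt_split_fix[OF fin y, of B] dt_split_fix[OF fin y, of A] r d
    by (simp add: algebra_simps)
qed



lemma dt_leaf:
  assumes fin: "finite V" and x: "x \<in> V" and y: "y \<in> V" and xy: "x \<noteq> y"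
    and leaf: "\<And>z. z \<in> V \<Longrightarrow> z \<noteq> x \<Longrightarrow> z \<noteq> y \<Longrightarrow> A x z = 0 \<and> A z x = 0"
  shows "dt V A = A x x * dt (V - {x}) A - A x y * A y x * dt (V - {x, y}) A"
proof -
  let ?t = "\<lambda>p. of_int (sign p) * (\<Prod>v\<in>V. A v (p v))"
  have fin2: "finite {p. p permutes V}" using fin by (rule finite_permutations)
  have eq: "{p. p permutes V \<and> p x \<noteq> x} = {p. p permutes V \<and> p x = y \<and> p y = x}
      \<union> {p. p permutes V \<and> p x \<noteq> x \<and> \<not> (p x = y \<and> p y = x)}" using xy by auto
  have split: "(\<Sum>p\<in>{p. p permutes V \<and> p x \<noteq> x}. ?t p) =
     (\<Sum>p\<in>{p. p permutes V \<and> p x = y \<and> p y = x}. ?t p) +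
     (\<Sum>p\<in>{p. p permutes V \<and> p x \<noteq> x \<and> \<not> (p x = y \<and> p y = x)}. ?t p)"
  proof -
    have f1: "finite {p. p permutes V \<and> p x = y \<and> p y = x}" by (rule finite_subset[OF _ fin2]) blast
    have f2: "finite {p. p permutes V \<and> p x \<noteq> x \<and> \<not> (p x = y \<and> p y = x)}" by (rule finite_subset[OF _ fin2]) blast
    have d: "{p. p permutes V \<and> p x = y \<and> p y = x} \<inter> {p. p permutes V \<and> p x \<noteq> x \<and> \<not> (p x = y \<and> p y = x)} = {}" by blast
    show ?thesis unfolding eq by (rule sum.union_disjoint[OF f1 f2 d])
  qed
  have zero: "(\<Sum>p\<in>{p. p permutes V \<and> p x \<noteq> x \<and> \<not> (p x = y \<and> p y = x)}. ?t p) = 0"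
  proof (rule sum.neutral, rule ballI)
    fix p assume "p \<in> {p. p permutes V \<and> p x \<noteq> x \<and> \<not> (p x = y \<and> p y = x)}"
    then have p: "p permutes V" "p x \<noteq> x" "\<not> (p x = y \<and> p y = x)" by auto
    have "(\<Prod>v\<in>V. A v (p v)) = 0"
    proof (cases "p x = y")
      case False
      have pxV: "p x \<in> V" using permutes_in_image[OF p(1)] x by blast
      have a0: "A x (p x) = 0" using leaf[OF pxV] p(2) False by blast
      show ?thesis using prod_zero[OF fin, of "\<lambda>v. A v (p v)"] x a0 by blast
    next
      case True
      define z where "z = inv p x"
      have pz: "p z = x" unfolding z_def using p(1) permutes_inverses(1) by metis
      have zV: "z \<in> V" using pz x p(1) by (metis permutes_in_image)
      have "z \<noteq> x" using pz True xy by auto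
      moreover have "z \<noteq> y" using pz True p(3) by auto
      ultimately have a0: "A z (p z) = 0" using leaf[OF zV] pz by auto
      show ?thesis using prod_zero[OF fin, of "\<lambda>v. A v (p v)"] zV a0 by blast
    qed
    then show "?t p = 0" by simp
  qed
  have swap: "(\<Sum>p\<in>{p. p permutes V \<and> p x = y \<and> p y = x}. ?t p)
      = - A x y * A y x * dt (V - {x, y}) A"
  proof -
    let ?T = "Transposition.transpose x y"
    have "(\<Sum>p\<in>{p. p permutes V \<and> p x = y \<and> p y = x}. ?t p)
       = (\<Sum>q\<in>{q. q permutes (V - {x, y})}. ?t (?T \<circ> q))"
    proof (rule sum.reindex_bij_witness[where i="\<lambda>q. ?T \<circ> q" and j="\<lambda>p. ?T \<circ> p"])
      fix p assume "p \<in> {p. p permutes V \<and> p x = y \<and> p y = x}"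
      show "?T \<circ> (?T \<circ> p) = p" by (auto simp: fun_eq_iff)
    next
      fix p assume "p \<in> {p. p permutes V \<and> p x = y \<and> p y = x}"
      then have p: "p permutes V" "p x = y" "p y = x" by auto
      have "?T \<circ> p permutes V" using p(1) by (intro permutes_compose permutes_swap_id x y)
      moreover have px: "(?T \<circ> p) x = x" "(?T \<circ> p) y = y" using p by auto
      ultimately have 1: "?T \<circ> p permutes (V - {x})"
        using permutes_fix_iff[of "?T \<circ> p" V x] by simp
      have 2: "?T \<circ> p permutes (V - {x} - {y})"
        using permutes_fix_iff[of "?T \<circ> p" "V - {x}" y] 1 px by simp
      have "V - {x} - {y} = V - {x, y}" by auto
      then show "?T \<circ> p \<in> {q. q permutes (V - {x, y})}" using 2 by simp
    next
      fix q assume "q \<in> {q. q permutes (V - {x, y})}"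
      show "?T \<circ> (?T \<circ> q) = q" by (auto simp: fun_eq_iff)
    next
      fix q assume "q \<in> {q. q permutes (V - {x, y})}"
      then have q: "q permutes (V - {x, y})" by auto
      then have "q permutes V" by (rule permutes_subset) auto
      then have "?T \<circ> q permutes V" by (intro permutes_compose permutes_swap_id x y)
      moreover have "q x = x" "q y = y" using permutes_not_in[OF q] by auto
      ultimately show "?T \<circ> q \<in> {p. p permutes V \<and> p x = y \<and> p y = x}" by auto
    next
      fix p assume "p \<in> {p. p permutes V \<and> p x = y \<and> p y = x}"
      have "?T \<circ> (?T \<circ> p) = p" by (auto simp: fun_eq_iff)
      then show "?t (?T \<circ> (?T \<circ> p)) = ?t p" by (simp only:)
    qed
    also have "\<dots> = (\<Sum>q\<in>{q. q permutes (V - {x, y})}. - A x y * A y x *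
          (of_int (sign q) * (\<Prod>v\<in>V - {x, y}. A v (q v))))"
    proof (rule sum.cong[OF refl])
      fix q assume "q \<in> {q. q permutes (V - {x, y})}"
      then have q: "q permutes (V - {x, y})" by auto
      have fq: "finite (V - {x, y})" using fin by auto
      have qx: "q x = x" "q y = y" using permutes_not_in[OF q] by auto
      have pq: "permutation q" using permutes_imp_permutation[OF fq q] .
      have sg: "sign (?T \<circ> q) = - sign q"
        by (simp add: sign_compose[OF permutation_swap_id pq] sign_swap_id xy)
      have Vd: "V = insert x (insert y (V - {x, y}))" using x y by auto
      have "(\<Prod>v\<in>V. A v ((?T \<circ> q) v)) = (\<Prod>v\<in>insert x (insert y (V - {x, y})). A v ((?T \<circ> q) v))"
        using Vd by simp
      also have "\<dots> = A x ((?T \<circ> q) x) * (A y ((?T \<circ> q) y) * (\<Prod>v\<in>V - {x, y}. A v ((?T \<circ> q) v)))"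
        using fq xy by simp
      also have "\<dots> = A x y * A y x * (\<Prod>v\<in>V - {x, y}. A v ((?T \<circ> q) v))"
        using qx by simp
      also have "(\<Prod>v\<in>V - {x, y}. A v ((?T \<circ> q) v)) = (\<Prod>v\<in>V - {x, y}. A v (q v))"
      proof (rule prod.cong[OF refl])
        fix v assume "v \<in> V - {x, y}"
        then have "q v \<in> V - {x, y}" using permutes_in_image[OF q, of v] by blast
        then show "A v ((?T \<circ> q) v) = A v (q v)" by auto
      qed
      finally show "?t (?T \<circ> q) = - A x y * A y x * (of_int (sign q) * (\<Prod>v\<in>V - {x, y}. A v (q v)))"
        using sg by simp
    qed
    also have "\<dots> = - A x y * A y x * dt (V - {x, y}) A"
      unfolding dt_def by (simp add: sum_distrib_left)
    finally show ?thesis .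
  qed
  show ?thesis using dt_split_fix[OF fin x, of A] split zero swap by simp
qed



lemma dt_reindex:
  assumes fin: "finite V" and inj: "inj_on f V"
  shows "dt (f ` V) A = dt V (\<lambda>u v. A (f u) (f v))"
proof -
  have bij: "bij_betw f V (f ` V)" using inj by (simp add: bij_betw_imageI)
  show ?thesis unfolding dt_def
  proof (rule sym, rule sum.reindex_bij_witness[where j="map_permutation V f" and i="map_permutation (f ` V) (inv_into V f)"])
    fix q assume "q \<in> {p. p permutes V}"
    then have q: "q permutes V" by auto
    show "map_permutation (f ` V) (inv_into V f) (map_permutation V f q) = q"
      by (rule map_permutation_compose_inv[OF bij q], rule inv_into_f_f[OF inj])
  next
    fix q assume "q \<in> {p. p permutes V}"
    then show "map_permutation V f q \<in> {p. p permutes f ` V}"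
      using map_permutation_permutes[OF bij] by auto
  next
    fix p assume "p \<in> {p. p permutes f ` V}"
    then have p: "p permutes f ` V" by auto
    show "map_permutation V f (map_permutation (f ` V) (inv_into V f) p) = p"
      by (rule map_permutation_compose_inv[OF bij_betw_inv_into[OF bij] p], rule f_inv_into_f)
  next
    fix p assume "p \<in> {p. p permutes f ` V}"
    then show "map_permutation (f ` V) (inv_into V f) p \<in> {p. p permutes V}"
      using map_permutation_permutes[OF bij_betw_inv_into[OF bij]] by auto
  next
    fix q assume "q \<in> {p. p permutes V}"
    then have q: "q permutes V" by auto
    have "sign (map_permutation V f q) = sign q" by (rule sign_map_permutation[OF inj q fin])
    moreover have "(\<Prod>v\<in>f ` V. A v (map_permutation V f q v)) = (\<Prod>v\<in>V. A (f v) (f (q v)))"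
    proof -
      have "(\<Prod>v\<in>f ` V. A v (map_permutation V f q v)) = (\<Prod>v\<in>V. A (f v) (map_permutation V f q (f v)))"
        by (rule prod.reindex_cong[OF inj refl]) simp
      also have "\<dots> = (\<Prod>v\<in>V. A (f v) (f (q v)))"
        by (rule prod.cong[OF refl]) (simp add: map_permutation_apply[OF inj])
      finally show ?thesis .
    qed
    ultimately show "of_int (sign (map_permutation V f q)) * (\<Prod>v\<in>f ` V. A v (map_permutation V f q v)) =
        of_int (sign q) * (\<Prod>v\<in>V. A (f v) (f (q v)))" by simp
  qed
qed



abbreviation K :: "real list \<Rightarrow> real" where "K \<equiv> chain_det"

definition Qd :: "real list \<Rightarrow> real" where
  "Qd b = (if b = [] then 0 else chain_det (tl b))"

definition chainM :: "real list \<Rightarrow> nat \<Rightarrow> nat \<Rightarrow> real" where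
  "chainM as = mg_matrix (\<lambda>i. as ! i) (\<lambda>i j. if Suc i = j \<or> Suc j = i then 1 else 0)"

lemma chain_det_dt: "chain_det as = dt {..<length as} (chainM as)"
  unfolding chain_det_def chainM_def mg_det_dt ..

lemma chain_det_Nil [simp]: "chain_det [] = 1"
  unfolding chain_det_dt dt_def by simp

lemma chain_det_single [simp]: "chain_det [a] = a"
proof -
  have "{..<Suc 0} = {0::nat}" by auto
  then show ?thesis unfolding chain_det_dt dt_def by (simp add: chainM_def mg_matrix_def)
qed

lemma chain_det_cong_prefix:
  assumes "m \<le> length bs" "take m bs = as"
  shows "dt {..<m} (chainM bs) = chain_det as"
proof -
  have la: "length as = m" using assms by auto
  show ?thesis unfolding chain_det_dt la
    by (rule dt_cong) (use assms in \<open>auto simp: chainM_def mg_matrix_def\<close>)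
qed

lemma chain_det_snoc2:
  "chain_det (xs @ [a, c]) = c * chain_det (xs @ [a]) - chain_det xs"
proof -
  let ?b = "xs @ [a, c]"
  let ?k = "length xs"
  let ?M = "chainM ?b"
  have L: "dt {..<Suc (Suc ?k)} ?M = ?M (Suc ?k) (Suc ?k) * dt ({..<Suc (Suc ?k)} - {Suc ?k}) ?M
     - ?M (Suc ?k) ?k * ?M ?k (Suc ?k) * dt ({..<Suc (Suc ?k)} - {Suc ?k, ?k}) ?M"
    by (rule dt_leaf) (auto simp: chainM_def mg_matrix_def)
  have s1: "{..<Suc (Suc ?k)} - {Suc ?k} = {..<Suc ?k}" by auto
  have s2: "{..<Suc (Suc ?k)} - {Suc ?k, ?k} = {..<?k}" by auto
  have e1: "dt {..<Suc ?k} ?M = chain_det (xs @ [a])"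
    by (rule chain_det_cong_prefix) auto
  have e2: "dt {..<?k} ?M = chain_det xs"
    by (rule chain_det_cong_prefix) auto
  have m: "?M (Suc ?k) (Suc ?k) = c" "?M (Suc ?k) ?k = -1" "?M ?k (Suc ?k) = -1"
    by (auto simp: chainM_def mg_matrix_def nth_append)
  show ?thesis using L unfolding s1 s2 e1 e2 m chain_det_dt[of ?b] by simp
qed

lemma Qd_snoc2: "Qd (xs @ [a, c]) = c * Qd (xs @ [a]) - Qd xs"
proof (cases xs)
  case Nil
  then show ?thesis by (simp add: Qd_def)
next
  case (Cons x ys)
  then show ?thesis using chain_det_snoc2[of ys a c] by (simp add: Qd_def)
qed

lemma chain_det_Cons: "chain_det (a # b) = a * chain_det b - Qd b"
proof (induction "length b" arbitrary: b rule: less_induct)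
  case less
  show ?case
  proof (cases b rule: rev_cases)
    case Nil
    then show ?thesis by (simp add: Qd_def)
  next
    case (snoc ys e)
    show ?thesis
    proof (cases ys rule: rev_cases)
      case Nil
      then show ?thesis using snoc chain_det_snoc2[of "[]" a e] by (simp add: Qd_def)
    next
      case (snoc zs d)
      have b: "b = zs @ [d, e]" using snoc \<open>b = ys @ [e]\<close> by simp
      have IH1: "chain_det (a # zs @ [d]) = a * chain_det (zs @ [d]) - Qd (zs @ [d])"
        using less b by simp
      have IH2: "chain_det (a # zs) = a * chain_det zs - Qd zs"
        using less b by simp
      have "chain_det (a # b) = e * chain_det (a # zs @ [d]) - chain_det (a # zs)"
        using chain_det_snoc2[of "a # zs" d e] b by simp
      also have "\<dots> = a * (e * chain_det (zs @ [d]) - chain_det zs) - (e * Qd (zs @ [d]) - Qd zs)"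
        unfolding IH1 IH2 by (simp add: algebra_simps)
      also have "\<dots> = a * chain_det b - Qd b"
        unfolding b chain_det_snoc2 Qd_snoc2 ..
      finally show ?thesis .
    qed
  qed
qed

lemma Qd_Cons [simp]: "Qd (a # b) = chain_det b"
  by (simp add: Qd_def)

lemma chain_det_pos:
  assumes "\<forall>x\<in>set b. x \<ge> 2"
  shows "chain_det b \<ge> Qd b + 1 \<and> chain_det b \<ge> 1"
  using assms
proof (induction b)
  case Nil
  then show ?case by (simp add: Qd_def)
next
  case (Cons a b)
  then have IH: "chain_det b \<ge> Qd b + 1" "chain_det b \<ge> 1" and a: "a \<ge> 2" by auto
  have "a * chain_det b \<ge> 2 * chain_det b" using a IH(2) by (intro mult_right_mono) auto
  then show ?case using IH unfolding chain_det_Cons Qd_Cons by linarith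
qed



definition hair_ok :: "'a set \<Rightarrow> ('a \<Rightarrow> 'a \<Rightarrow> real) \<Rightarrow> 'a \<Rightarrow> (nat \<Rightarrow> 'a) \<Rightarrow> real list \<Rightarrow> bool" where
 "hair_ok W A y h b \<longleftrightarrow>
   (\<forall>l<length b. A (h l) (h l) = b ! l) \<and>
   (\<forall>l. Suc l < length b \<longrightarrow> A (h l) (h (Suc l)) = -1 \<and> A (h (Suc l)) (h l) = -1) \<and>
   (0 < length b \<longrightarrow> A (h 0) y = -1 \<and> A y (h 0) = -1) \<and>
   (\<forall>l<length b. \<forall>z\<in>W. z \<notin> h ` {..<length b} \<longrightarrow> (z \<noteq> y \<or> 0 < l) \<longrightarrow> A (h l) z = 0 \<and> A z (h l) = 0) \<and>
   (\<forall>l<length b. \<forall>l'<length b. l \<noteq> l' \<longrightarrow> Suc l \<noteq> l' \<longrightarrow> Suc l' \<noteq> l \<longrightarrow> A (h l) (h l') = 0)"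

lemma hair_ok_restrict:
  assumes ok: "hair_ok W A y h b" and sub: "W' \<subseteq> W" and m: "m \<le> length b"
    and nz: "\<And>z. z \<in> W' \<Longrightarrow> z \<notin> h ` {..<m} \<Longrightarrow> z \<notin> h ` {..<length b}"
  shows "hair_ok W' A y h (take m b)"
proof -
  have lt: "length (take m b) = m" using m by simp
  have diag: "\<And>l. l < length b \<Longrightarrow> A (h l) (h l) = b ! l"
    and link: "\<And>l. Suc l < length b \<Longrightarrow> A (h l) (h (Suc l)) = -1 \<and> A (h (Suc l)) (h l) = -1"
    and root: "0 < length b \<Longrightarrow> A (h 0) y = -1 \<and> A y (h 0) = -1"
    and zer: "\<And>l z. l < length b \<Longrightarrow> z \<in> W \<Longrightarrow> z \<notin> h ` {..<length b} \<Longrightarrow> (z \<noteq> y \<or> 0 < l) \<Longrightarrow> A (h l) z = 0 \<and> A z (h l) = 0"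
    and int: "\<And>l l'. l < length b \<Longrightarrow> l' < length b \<Longrightarrow> l \<noteq> l' \<Longrightarrow> Suc l \<noteq> l' \<Longrightarrow> Suc l' \<noteq> l \<Longrightarrow> A (h l) (h l') = 0"
    using ok unfolding hair_ok_def by blast+
  have c1: "\<forall>l<m. A (h l) (h l) = take m b ! l"
  proof (intro allI impI)
    fix l assume l: "l < m"
    then have "l < length b" using m by simp
    then show "A (h l) (h l) = take m b ! l" using diag l by simp
  qed
  have c2: "\<forall>l. Suc l < m \<longrightarrow> A (h l) (h (Suc l)) = -1 \<and> A (h (Suc l)) (h l) = -1"
  proof (intro allI impI)
    fix l assume "Suc l < m"
    then have "Suc l < length b" using m by simp
    then show "A (h l) (h (Suc l)) = -1 \<and> A (h (Suc l)) (h l) = -1" by (rule link)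
  qed
  have c3: "0 < m \<longrightarrow> A (h 0) y = -1 \<and> A y (h 0) = -1"
  proof
    assume "0 < m"
    then have "0 < length b" using m by linarith
    then show "A (h 0) y = -1 \<and> A y (h 0) = -1" by (rule root)
  qed
  have c4: "\<forall>l<m. \<forall>z\<in>W'. z \<notin> h ` {..<m} \<longrightarrow> (z \<noteq> y \<or> 0 < l) \<longrightarrow> A (h l) z = 0 \<and> A z (h l) = 0"
  proof (intro allI impI ballI)
    fix l z assume l: "l < m" and z: "z \<in> W'" and zn: "z \<notin> h ` {..<m}" and zy: "z \<noteq> y \<or> 0 < l"
    have "l < length b" using l m by simp
    moreover have "z \<in> W" using z sub by blast
    moreover have "z \<notin> h ` {..<length b}" using nz z zn by blast
    ultimately show "A (h l) z = 0 \<and> A z (h l) = 0" using zer zy by blast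
  qed
  have c5: "\<forall>l<m. \<forall>l'<m. l \<noteq> l' \<longrightarrow> Suc l \<noteq> l' \<longrightarrow> Suc l' \<noteq> l \<longrightarrow> A (h l) (h l') = 0"
  proof (intro allI impI)
    fix l l' assume "l < m" "l' < m" "l \<noteq> l'" "Suc l \<noteq> l'" "Suc l' \<noteq> l"
    moreover have "l < length b" "l' < length b" using \<open>l < m\<close> \<open>l' < m\<close> m by simp_all
    ultimately show "A (h l) (h l') = 0" using int by blast
  qed
  show ?thesis unfolding hair_ok_def lt using c1 c2 c3 c4 c5 by blast
qed

lemma dt_chain:
  assumes "finite W" "y \<in> W" "inj_on h {..<length b}" "h ` {..<length b} \<subseteq> W"
    "y \<notin> h ` {..<length b}" "hair_ok W A y h b"
  shows "dt W A = K b * dt (W - h ` {..<length b}) A - Qd b * dt (W - h ` {..<length b} - {y}) A"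
  using assms
proof (induction "length b" arbitrary: W b rule: less_induct)
  case less
  note fin = less.prems(1) and yW = less.prems(2) and inj = less.prems(3) and sub = less.prems(4)
    and ny = less.prems(5) and ok = less.prems(6)
  have diag: "\<And>l. l < length b \<Longrightarrow> A (h l) (h l) = b ! l"
    and link: "\<And>l. Suc l < length b \<Longrightarrow> A (h l) (h (Suc l)) = -1 \<and> A (h (Suc l)) (h l) = -1"
    and root: "0 < length b \<Longrightarrow> A (h 0) y = -1 \<and> A y (h 0) = -1"
    and zer: "\<And>l z. l < length b \<Longrightarrow> z \<in> W \<Longrightarrow> z \<notin> h ` {..<length b} \<Longrightarrow> (z \<noteq> y \<or> 0 < l) \<Longrightarrow> A (h l) z = 0 \<and> A z (h l) = 0"
    and int: "\<And>l l'. l < length b \<Longrightarrow> l' < length b \<Longrightarrow> l \<noteq> l' \<Longrightarrow> Suc l \<noteq> l' \<Longrightarrow> Suc l' \<noteq> l \<Longrightarrow> A (h l) (h l') = 0"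
    using ok unfolding hair_ok_def by blast+
  show ?case
  proof (cases "length b")
    case 0
    then show ?thesis by (simp add: Qd_def)
  next
    case (Suc k)
    define x where "x = h k"
    define y' where "y' = (if k = 0 then y else h (k - 1))"
    have xW: "x \<in> W" using sub Suc x_def by auto
    have y'W: "y' \<in> W" using sub yW Suc y'_def by auto
    have xy': "x \<noteq> y'"
    proof (cases k)
      case 0
      then show ?thesis using ny Suc unfolding x_def y'_def by auto
    next
      case (Suc j)
      then show ?thesis using inj_onD[OF inj, of k j] \<open>length b = Suc k\<close> unfolding x_def y'_def by auto
    qed
    have leafc: "A x z = 0 \<and> A z x = 0" if zW: "z \<in> W" and zx: "z \<noteq> x" and zy: "z \<noteq> y'" for z
    proof (cases "z \<in> h ` {..<length b}")
      case True
      then obtain l' where l': "l' < Suc k" "z = h l'" using Suc by auto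
      have "l' \<noteq> k" using zx l' x_def by auto
      moreover have "Suc l' \<noteq> k" using zy l' y'_def by auto
      ultimately show ?thesis using int[of k l'] int[of l' k] l' Suc x_def by auto
    next
      case False
      have "z \<noteq> y \<or> 0 < k" using zy y'_def by (cases k) auto
      then show ?thesis using zer[of k z] False zW Suc x_def by auto
    qed
    have L: "dt W A = A x x * dt (W - {x}) A - A x y' * A y' x * dt (W - {x, y'}) A"
      by (rule dt_leaf[where A=A, OF fin xW y'W xy' leafc])
    have Axx: "A x x = b ! k" using diag Suc x_def by auto
    have Axy: "A x y' * A y' x = 1"
    proof (cases k)
      case 0
      then show ?thesis using root Suc x_def y'_def by auto
    next
      case (Suc j)
      then show ?thesis using link[of j] \<open>length b = Suc k\<close> x_def y'_def by auto
    qed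
    have img: "h ` {..<length b} = insert x (h ` {..<k})" using Suc x_def by (auto simp: lessThan_Suc)
    show ?thesis
    proof (cases k)
      case 0
      have b: "b = [b ! 0]" using Suc 0 by (metis One_nat_def length_0_conv length_Suc_conv nth_Cons_0)
      have i0: "h ` {..<length b} = {x}" using img 0 by simp
      have e: "dt W A = b ! 0 * dt (W - {x}) A - dt (W - {x} - {y}) A"
        using L Axx Axy 0 y'_def by (simp add: insert_commute set_diff_eq)
      have Kb: "K b = b ! 0" using b by (metis chain_det_single)
      have Qb: "Qd b = 1" using b by (metis Qd_Cons chain_det_Nil)
      show ?thesis unfolding i0 Kb Qb using e by simp
    next
      case (Suc j)
      have y'j: "y' = h j" using Suc y'_def by simp
      have lb: "length b = Suc (Suc j)" using \<open>length b = Suc k\<close> Suc by simp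
      have xh: "x = h (Suc j)" using x_def Suc by simp
      have injk: "inj_on h {..<k}" using inj by (rule inj_on_subset) (auto simp: lb Suc)
      have injj: "inj_on h {..<j}" using inj by (rule inj_on_subset) (auto simp: lb)
      have hx_notin: "x \<notin> h ` {..<k}"
      proof
        assume "x \<in> h ` {..<k}"
        then obtain l where l: "l < k" "h l = h k" using x_def by auto
        then have "l = k" using inj_onD[OF inj, of l k] lb Suc by auto
        then show False using l by simp
      qed
      have hxy_notin1: "x \<notin> h ` {..<j}"
      proof
        assume "x \<in> h ` {..<j}"
        then obtain l where l: "l < j" "h l = h (Suc j)" using xh by auto
        then have "l = Suc j" using inj_onD[OF inj, of l "Suc j"] lb by auto
        then show False using l by simp
      qed
      have hxy_notin2: "y' \<notin> h ` {..<j}"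
      proof
        assume "y' \<in> h ` {..<j}"
        then obtain l where l: "l < j" "h l = h j" using y'j by auto
        then have "l = j" using inj_onD[OF inj, of l j] lb by auto
        then show False using l by simp
      qed
      note hxy_notin = hxy_notin1 hxy_notin2
      have yx: "y \<noteq> x" "y \<noteq> y'" using ny unfolding xh y'j by (auto simp: lb)
      have IH1: "dt (W - {x}) A = K (take k b) * dt (W - {x} - h ` {..<k}) A
          - Qd (take k b) * dt (W - {x} - h ` {..<k} - {y}) A"
      proof -
        have lt: "length (take k b) = k" using lb Suc by simp
        have "hair_ok (W - {x}) A y h (take k b)"
          by (rule hair_ok_restrict[OF ok]) (use img lb Suc in auto)
        moreover have "h ` {..<k} \<subseteq> W - {x}" using sub img hx_notin by auto
        moreover have "take k b = take k b" ..
        moreover have "k < length b" using lb Suc by simp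
        moreover have "finite (W - {x})" using fin by simp
        moreover have "y \<in> W - {x}" using yW yx by simp
        moreover have "y \<notin> h ` {..<k}" using ny img by auto
        ultimately show ?thesis
          using less.hyps[of "take k b" "W - {x}"] injk unfolding lt by blast
      qed
      have IH2: "dt (W - {x, y'}) A = K (take j b) * dt (W - {x, y'} - h ` {..<j}) A
          - Qd (take j b) * dt (W - {x, y'} - h ` {..<j} - {y}) A"
      proof -
        have lt: "length (take j b) = j" using lb by simp
        have img2: "h ` {..<length b} = insert x (insert y' (h ` {..<j}))"
          unfolding lb xh y'j by (auto simp: lessThan_Suc)
        have "hair_ok (W - {x, y'}) A y h (take j b)"
          by (rule hair_ok_restrict[OF ok]) (use img2 lb in auto)
        moreover have "h ` {..<j} \<subseteq> W - {x, y'}" using sub img2 hxy_notin by auto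
        moreover have "j < length b" using lb by simp
        moreover have "finite (W - {x, y'})" using fin by simp
        moreover have "y \<in> W - {x, y'}" using yW yx by simp
        moreover have "y \<notin> h ` {..<j}" using ny img2 by auto
        ultimately show ?thesis
          using less.hyps[of "take j b" "W - {x, y'}"] injj unfolding lt by blast
      qed
      have s1: "W - {x} - h ` {..<k} = W - h ` {..<length b}" using img by auto
      have img2: "h ` {..<length b} = insert x (insert y' (h ` {..<j}))"
        unfolding lb xh y'j by (auto simp: lessThan_Suc)
      have s2: "W - {x, y'} - h ` {..<j} = W - h ` {..<length b}" using img2 by auto
      have bb: "b = take j b @ [b ! j, b ! k]"
      proof -
        have e0: "take (Suc (Suc j)) b = b" using lb by simp
        have e1: "take (Suc (Suc j)) b = take (Suc j) b @ [b ! Suc j]" by (rule take_Suc_conv_app_nth) (simp add: lb)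
        have e2: "take (Suc j) b = take j b @ [b ! j]" by (rule take_Suc_conv_app_nth) (simp add: lb)
        show ?thesis using e0 e1 e2 Suc by simp
      qed
      have tk: "take k b = take j b @ [b ! j]"
        unfolding Suc by (rule take_Suc_conv_app_nth) (simp add: lb)
      have Kb: "K b = b ! k * K (take k b) - K (take j b)"
        using chain_det_snoc2[of "take j b" "b ! j" "b ! k"] bb tk by simp
      have Qb: "Qd b = b ! k * Qd (take k b) - Qd (take j b)"
        using Qd_snoc2[of "take j b" "b ! j" "b ! k"] bb tk by simp
      show ?thesis
        unfolding L IH1 IH2 s1 s2 Axx Axy Kb Qb by (simp add: algebra_simps)
    qed
  qed
qed



lemma hair_ok_subset:
  assumes "hair_ok W A y h b" "W' \<subseteq> W"
  shows "hair_ok W' A y h b"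
  using hair_ok_restrict[OF assms order_refl] by simp

lemma hair_ok_change:
  assumes ok: "hair_ok W A y h b"
    and ch: "\<And>l z. l < length b \<Longrightarrow> A' (h l) z = A (h l) z \<and> A' z (h l) = A z (h l)"
  shows "hair_ok W A' y h b"
proof -
  have diag: "\<And>l. l < length b \<Longrightarrow> A (h l) (h l) = b ! l"
    and link: "\<And>l. Suc l < length b \<Longrightarrow> A (h l) (h (Suc l)) = -1 \<and> A (h (Suc l)) (h l) = -1"
    and root: "0 < length b \<Longrightarrow> A (h 0) y = -1 \<and> A y (h 0) = -1"
    and zer: "\<And>l z. l < length b \<Longrightarrow> z \<in> W \<Longrightarrow> z \<notin> h ` {..<length b} \<Longrightarrow> (z \<noteq> y \<or> 0 < l) \<Longrightarrow> A (h l) z = 0 \<and> A z (h l) = 0"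
    and int: "\<And>l l'. l < length b \<Longrightarrow> l' < length b \<Longrightarrow> l \<noteq> l' \<Longrightarrow> Suc l \<noteq> l' \<Longrightarrow> Suc l' \<noteq> l \<Longrightarrow> A (h l) (h l') = 0"
    using ok unfolding hair_ok_def by blast+
  have c1: "\<forall>l<length b. A' (h l) (h l) = b ! l"
  proof (intro allI impI)
    fix l assume l: "l < length b"
    show "A' (h l) (h l) = b ! l" using ch[OF l, of "h l"] diag[OF l] by simp
  qed
  have c2: "\<forall>l. Suc l < length b \<longrightarrow> A' (h l) (h (Suc l)) = -1 \<and> A' (h (Suc l)) (h l) = -1"
  proof (intro allI impI)
    fix l assume l: "Suc l < length b"
    then have l': "l < length b" by simp
    show "A' (h l) (h (Suc l)) = -1 \<and> A' (h (Suc l)) (h l) = -1"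
      using ch[OF l', of "h (Suc l)"] link[OF l] by simp
  qed
  have c3: "0 < length b \<longrightarrow> A' (h 0) y = -1 \<and> A' y (h 0) = -1"
  proof
    assume l: "0 < length b"
    show "A' (h 0) y = -1 \<and> A' y (h 0) = -1" using ch[OF l, of y] root[OF l] by simp
  qed
  have c4: "\<forall>l<length b. \<forall>z\<in>W. z \<notin> h ` {..<length b} \<longrightarrow> (z \<noteq> y \<or> 0 < l) \<longrightarrow> A' (h l) z = 0 \<and> A' z (h l) = 0"
  proof (intro allI impI ballI)
    fix l z assume l: "l < length b" and z: "z \<in> W" and zn: "z \<notin> h ` {..<length b}" and zy: "z \<noteq> y \<or> 0 < l"
    show "A' (h l) z = 0 \<and> A' z (h l) = 0" using ch[OF l, of z] zer[OF l z zn zy] by simp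
  qed
  have c5: "\<forall>l<length b. \<forall>l'<length b. l \<noteq> l' \<longrightarrow> Suc l \<noteq> l' \<longrightarrow> Suc l' \<noteq> l \<longrightarrow> A' (h l) (h l') = 0"
  proof (intro allI impI)
    fix l l' assume a: "l < length b" "l' < length b" "l \<noteq> l'" "Suc l \<noteq> l'" "Suc l' \<noteq> l"
    show "A' (h l) (h l') = 0" using ch[OF a(1), of "h l'"] int[OF a] by simp
  qed
  show ?thesis unfolding hair_ok_def using c1 c2 c3 c4 c5 by blast
qed

lemma dt_hairs:
  fixes W0 :: "'a set" and I :: "'i set" and y :: "'i \<Rightarrow> 'a" and h :: "'i \<Rightarrow> nat \<Rightarrow> 'a"
    and b :: "'i \<Rightarrow> real list"
  assumes finI: "finite I" and fin: "finite W0"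
  shows "(\<forall>i\<in>I. y i \<in> W0) \<longrightarrow>
    (\<forall>i\<in>I. inj_on (h i) {..<length (b i)}) \<longrightarrow>
    (\<forall>i\<in>I. \<forall>l<length (b i). h i l \<notin> W0) \<longrightarrow>
    (\<forall>i\<in>I. \<forall>j\<in>I. \<forall>l<length (b i). \<forall>l'<length (b j). h i l = h j l' \<longrightarrow> i = j) \<longrightarrow>
    (\<forall>i\<in>I. K (b i) \<noteq> 0) \<longrightarrow>
    (\<forall>i\<in>I. hair_ok (W0 \<union> (\<Union>j\<in>I. h j ` {..<length (b j)})) A (y i) (h i) (b i)) \<longrightarrow>
    dt (W0 \<union> (\<Union>i\<in>I. h i ` {..<length (b i)})) A =
      (\<Prod>i\<in>I. K (b i)) *
      dt W0 (\<lambda>u v. if u = v then A u u - (\<Sum>i\<in>{i\<in>I. y i = u}. Qd (b i) / K (b i)) else A u v)"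
  using finI
proof (induction I arbitrary: A rule: finite_induct)
  case empty
  have "(\<lambda>u v. if u = v then A u u - (\<Sum>i\<in>{i\<in>{}. y i = u}. Qd (b i) / K (b i)) else A u v) = A"
    by (auto simp: fun_eq_iff)
  then show ?case by simp
next
  case (insert i0 I)
  show ?case
  proof (intro impI)
    assume yW: "\<forall>i\<in>insert i0 I. y i \<in> W0"
      and inj: "\<forall>i\<in>insert i0 I. inj_on (h i) {..<length (b i)}"
      and nW: "\<forall>i\<in>insert i0 I. \<forall>l<length (b i). h i l \<notin> W0"
      and dj: "\<forall>i\<in>insert i0 I. \<forall>j\<in>insert i0 I. \<forall>l<length (b i). \<forall>l'<length (b j). h i l = h j l' \<longrightarrow> i = j"
      and Knz: "\<forall>i\<in>insert i0 I. K (b i) \<noteq> 0"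
      and ok: "\<forall>i\<in>insert i0 I. hair_ok (W0 \<union> (\<Union>j\<in>insert i0 I. h j ` {..<length (b j)})) A (y i) (h i) (b i)"
    define H where "H i = h i ` {..<length (b i)}" for i
    define U where "U = W0 \<union> (\<Union>j\<in>I. H j)"
    define W where "W = W0 \<union> (\<Union>j\<in>insert i0 I. H j)"
    define y0 where "y0 = y i0"
    define K0 where "K0 = K (b i0)"
    define Q0 where "Q0 = Qd (b i0)"
    have WU: "W = H i0 \<union> U" unfolding W_def U_def by auto
    have finU: "finite U" unfolding U_def H_def using fin insert.hyps(1) by auto
    have finW: "finite W" unfolding WU using finU H_def by auto
    have y0U: "y0 \<in> U" unfolding U_def y0_def using yW by auto
    have disj: "H i0 \<inter> U = {}"
    proof -
      have "H i0 \<inter> W0 = {}" using nW unfolding H_def by auto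
      moreover have "H i0 \<inter> H j = {}" if "j \<in> I" for j
        using dj that insert.hyps(2) unfolding H_def by fastforce
      ultimately show ?thesis unfolding U_def by auto
    qed
    have WH: "W - H i0 = U" using WU disj by auto
    have y0W: "y0 \<in> W" unfolding W_def y0_def using yW by auto
    have inj0: "inj_on (h i0) {..<length (b i0)}" using inj by auto
    have H0W: "h i0 ` {..<length (b i0)} \<subseteq> W" unfolding W_def H_def by auto
    have y0nH: "y0 \<notin> h i0 ` {..<length (b i0)}" using nW yW unfolding y0_def by auto
    have ok0: "hair_ok W A y0 (h i0) (b i0)" using ok unfolding W_def H_def y0_def by auto
    have ch0: "dt W A = K0 * dt (W - h i0 ` {..<length (b i0)}) A - Q0 * dt (W - h i0 ` {..<length (b i0)} - {y0}) A"
      unfolding K0_def Q0_def by (rule dt_chain[OF finW y0W inj0 H0W y0nH ok0])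
    have HH: "h i0 ` {..<length (b i0)} = H i0" by (simp add: H_def)
    have ch: "dt W A = K0 * dt U A - Q0 * dt (U - {y0}) A"
      using ch0 unfolding HH WH .
    define A2 where "A2 = (\<lambda>u v. if u = v \<and> u = y0 then A u u - Q0 / K0 else A u v)"
    have K0nz: "K0 \<noteq> 0" using Knz K0_def by auto
    have dg: "dt U A2 = dt U A + (A2 y0 y0 - A y0 y0) * dt (U - {y0}) A"
      by (rule dt_diag[OF finU y0U]) (auto simp: A2_def)
    have a: "A2 y0 y0 - A y0 y0 = - Q0 / K0" by (simp add: A2_def)
    have "K0 * dt U A2 = K0 * dt U A - Q0 * dt (U - {y0}) A"
      unfolding dg a using K0nz by (simp add: field_simps)
    then have main1: "dt W A = K0 * dt U A2" using ch by simp
    have ok2: "\<forall>i\<in>I. hair_ok (W0 \<union> (\<Union>j\<in>I. h j ` {..<length (b j)})) A2 (y i) (h i) (b i)"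
    proof
      fix i assume i: "i \<in> I"
      have "hair_ok (W0 \<union> (\<Union>j\<in>I. h j ` {..<length (b j)})) A (y i) (h i) (b i)"
      proof -
        have oki: "hair_ok (W0 \<union> (\<Union>j\<in>insert i0 I. h j ` {..<length (b j)})) A (y i) (h i) (b i)"
          using ok i by blast
        show ?thesis by (rule hair_ok_subset[OF oki]) auto
      qed
      then show "hair_ok (W0 \<union> (\<Union>j\<in>I. h j ` {..<length (b j)})) A2 (y i) (h i) (b i)"
      proof (rule hair_ok_change)
        fix l z assume "l < length (b i)"
        then have "h i l \<notin> W0" using nW i by blast
        moreover have "y0 \<in> W0" using yW y0_def by blast
        ultimately have "h i l \<noteq> y0" by blast
        then show "A2 (h i l) z = A (h i l) z \<and> A2 z (h i l) = A z (h i l)"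
          unfolding A2_def by auto
      qed
    qed
    have IH: "dt U A2 = (\<Prod>i\<in>I. K (b i)) *
      dt W0 (\<lambda>u v. if u = v then A2 u u - (\<Sum>i\<in>{i\<in>I. y i = u}. Qd (b i) / K (b i)) else A2 u v)"
      using insert.IH[of A2] yW inj nW dj Knz ok2 unfolding U_def H_def by auto
    have mat: "(\<lambda>u v. if u = v then A2 u u - (\<Sum>i\<in>{i\<in>I. y i = u}. Qd (b i) / K (b i)) else A2 u v)
      = (\<lambda>u v. if u = v then A u u - (\<Sum>i\<in>{i\<in>insert i0 I. y i = u}. Qd (b i) / K (b i)) else A u v)"
    proof (intro ext)
      fix u v
      show "(if u = v then A2 u u - (\<Sum>i\<in>{i\<in>I. y i = u}. Qd (b i) / K (b i)) else A2 u v)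
        = (if u = v then A u u - (\<Sum>i\<in>{i\<in>insert i0 I. y i = u}. Qd (b i) / K (b i)) else A u v)"
      proof (cases "u = y0")
        case True
        have se: "{i\<in>insert i0 I. y i = u} = insert i0 {i\<in>I. y i = u}" using True y0_def by auto
        have f: "finite {i\<in>I. y i = u}" using insert.hyps(1) by auto
        have n: "i0 \<notin> {i\<in>I. y i = u}" using insert.hyps(2) by auto
        have S: "(\<Sum>i\<in>{i\<in>insert i0 I. y i = u}. Qd (b i) / K (b i)) =
            Qd (b i0) / K (b i0) + (\<Sum>i\<in>{i\<in>I. y i = u}. Qd (b i) / K (b i))"
          unfolding se by (rule sum.insert[OF f n])
        show ?thesis unfolding S using True by (simp add: A2_def K0_def Q0_def)
      next
        case False
        have se: "{i\<in>insert i0 I. y i = u} = {i\<in>I. y i = u}" using False y0_def by auto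
        show ?thesis unfolding se using False by (simp add: A2_def)
      qed
    qed
    have "dt (W0 \<union> (\<Union>i\<in>insert i0 I. h i ` {..<length (b i)})) A = dt W A"
      unfolding W_def H_def ..
    also have "\<dots> = K0 * ((\<Prod>i\<in>I. K (b i)) *
      dt W0 (\<lambda>u v. if u = v then A u u - (\<Sum>i\<in>{i\<in>insert i0 I. y i = u}. Qd (b i) / K (b i)) else A u v))"
      unfolding main1 IH mat ..
    also have "\<dots> = (\<Prod>i\<in>insert i0 I. K (b i)) *
      dt W0 (\<lambda>u v. if u = v then A u u - (\<Sum>i\<in>{i\<in>insert i0 I. y i = u}. Qd (b i) / K (b i)) else A u v)"
      using insert.hyps by (simp add: K0_def)
    finally show "dt (W0 \<union> (\<Union>i\<in>insert i0 I. h i ` {..<length (b i)})) A = (\<Prod>i\<in>insert i0 I. K (b i)) *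
      dt W0 (\<lambda>u v. if u = v then A u u - (\<Sum>i\<in>{i\<in>insert i0 I. y i = u}. Qd (b i) / K (b i)) else A u v)" .
  qed
qed



lemma chain_facts:
  fixes c :: "int list"
  assumes ne: "c \<noteq> []" and c0: "c ! 0 \<ge> 1" and cl: "\<forall>l. 1 \<le> l \<and> l < length c \<longrightarrow> c ! l \<ge> 2"
  shows "q_of c = K (map real_of_int (tl c))"
    and "p_of c = real_of_int (c ! 0) * q_of c - Qd (map real_of_int (tl c))"
    and "q_of c \<ge> 1" and "p_of c \<ge> 1"
proof -
  show q: "q_of c = K (map real_of_int (tl c))" unfolding q_of_def ..
  have mc: "map real_of_int c = real_of_int (c ! 0) # map real_of_int (tl c)"
    using ne by (cases c) auto
  show p: "p_of c = real_of_int (c ! 0) * q_of c - Qd (map real_of_int (tl c))"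
    unfolding p_of_def mc chain_det_Cons q ..
  have all2: "\<forall>x\<in>set (map real_of_int (tl c)). x \<ge> 2"
  proof
    fix x assume "x \<in> set (map real_of_int (tl c))"
    then obtain l where l: "l < length (tl c)" "x = real_of_int (tl c ! l)"
      by (auto simp: in_set_conv_nth)
    have "tl c ! l = c ! Suc l" using ne by (cases c) auto
    moreover have "c ! Suc l \<ge> 2" using cl l(1) by auto
    ultimately show "x \<ge> 2" using l(2) by simp
  qed
  have pos: "K (map real_of_int (tl c)) \<ge> Qd (map real_of_int (tl c)) + 1"
    "K (map real_of_int (tl c)) \<ge> 1"
    using chain_det_pos[OF all2] by auto
  show "q_of c \<ge> 1" using pos q by simp
  have m: "real_of_int (c ! 0) * q_of c \<ge> 1 * q_of c"
    using c0 pos q by (intro mult_right_mono) auto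
  show "p_of c \<ge> 1" using p pos q m by linarith
qed



lemma prod_Sigma_split:
  assumes "finite V"
  shows "(\<Prod>v\<in>V. \<Prod>j<length (C v). f (C v ! j)) = (\<Prod>i\<in>Sigma V (\<lambda>v. {..<length (C v)}). f (C (fst i) ! snd i))"
  using assms by (subst prod.Sigma) (auto simp: case_prod_beta)

lemma sum_fiber:
  assumes "u \<in> V"
  shows "(\<Sum>i\<in>{i\<in>Sigma V (\<lambda>v. {..<length (C v)}). fst i = u}. g i) = (\<Sum>j<length (C u). g (u, j))"
proof -
  have "{i\<in>Sigma V (\<lambda>v. {..<length (C v)}). fst i = u} = Pair u ` {..<length (C u)}"
    using assms by auto
  moreover have "inj_on (Pair u) {..<length (C u)}" by (auto simp: inj_on_def)
  ultimately show ?thesis by (simp add: sum.reindex)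
qed

lemma hairy_result:
  fixes V :: "'v set" and n :: "'v \<Rightarrow> real" and w :: "'v \<Rightarrow> 'v \<Rightarrow> nat"
    and C :: "'v \<Rightarrow> int list list"
  assumes finV: "finite V"
    and chains: "\<And>v j. v \<in> V \<Longrightarrow> j < length (C v) \<Longrightarrow>
         C v ! j \<noteq> [] \<and> C v ! j ! 0 \<ge> 1 \<and>
         (\<forall>l. 1 \<le> l \<and> l < length (C v ! j) \<longrightarrow> C v ! j ! l \<ge> 2)"
  shows "mg_det (hairy_V V C) (hairy_mark n C) (hairy_E w) =
    (\<Prod>i\<in>Sigma V (\<lambda>v. {..<length (C v)}). q_of (C (fst i) ! snd i)) *
    mg_det V (\<lambda>v. n v + (\<Sum>j<length (C v). p_of (C v ! j) / q_of (C v ! j))) w"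
proof -
  define I where "I = Sigma V (\<lambda>v. {..<length (C v)})"
  define y :: "'v \<times> nat \<Rightarrow> 'v + 'v \<times> nat \<times> nat" where "y i = Inl (fst i)" for i
  define h :: "'v \<times> nat \<Rightarrow> nat \<Rightarrow> 'v + 'v \<times> nat \<times> nat" where "h i l = Inr (fst i, snd i, Suc l)" for i l
  define b where "b i = map real_of_int (tl (C (fst i) ! snd i))" for i
  define A where "A = mg_matrix (hairy_mark n C) (hairy_E w)"
  define W0 :: "('v + 'v \<times> nat \<times> nat) set" where "W0 = Inl ` V"
  have finI: "finite I" unfolding I_def using finV by auto
  have finW0: "finite W0" unfolding W0_def using finV by auto
  have lb: "length (b i) = length (C (fst i) ! snd i) - 1" for i unfolding b_def by simp
  have setEq: "hairy_V V C = W0 \<union> (\<Union>i\<in>I. h i ` {..<length (b i)})"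
  proof
    show "hairy_V V C \<subseteq> W0 \<union> (\<Union>i\<in>I. h i ` {..<length (b i)})"
    proof
      fix z assume "z \<in> hairy_V V C"
      then consider (a) "z \<in> Inl ` V" | (b) v j l where "z = Inr (v, j, l)" "v \<in> V" "j < length (C v)"
        "1 \<le> l" "l < length (C v ! j)"
        unfolding hairy_V_def by blast
      then show "z \<in> W0 \<union> (\<Union>i\<in>I. h i ` {..<length (b i)})"
      proof cases
        case a then show ?thesis unfolding W0_def by blast
      next
        case b
        have "z = h (v, j) (l - 1)" using b unfolding h_def by simp
        moreover have "l - 1 < length (b (v, j))" using b lb by simp
        moreover have "(v, j) \<in> I" using b unfolding I_def by simp
        ultimately show ?thesis by blast
      qed
    qed
  next
    show "W0 \<union> (\<Union>i\<in>I. h i ` {..<length (b i)}) \<subseteq> hairy_V V C"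
      unfolding W0_def hairy_V_def I_def h_def using lb by force
  qed
  have cf: "C (fst i) ! snd i \<noteq> [] \<and> C (fst i) ! snd i ! 0 \<ge> 1 \<and>
      (\<forall>l. 1 \<le> l \<and> l < length (C (fst i) ! snd i) \<longrightarrow> C (fst i) ! snd i ! l \<ge> 2)" if "i \<in> I" for i
    using chains[of "fst i" "snd i"] that unfolding I_def by auto
  have qK: "q_of (C (fst i) ! snd i) = K (b i)" for i unfolding q_of_def b_def ..
  have Kpos: "K (b i) \<ge> 1" if "i \<in> I" for i
    using chain_facts(3)[of "C (fst i) ! snd i"] cf[OF that] qK by auto
  have ok: "hair_ok (W0 \<union> (\<Union>j\<in>I. h j ` {..<length (b j)})) A (y i) (h i) (b i)" if iI: "i \<in> I" for i
  proof -
    obtain v j where i: "i = (v, j)" by (cases i)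
    have ne: "C v ! j \<noteq> []" using cf[OF iI] i by simp
    show ?thesis unfolding hair_ok_def
    proof (intro conjI allI impI ballI)
      fix l assume "l < length (b i)"
      then show "A (h i l) (h i l) = b i ! l"
        using ne unfolding A_def h_def b_def i by (simp add: mg_matrix_def nth_tl)
    next
      fix l assume "Suc l < length (b i)"
      then show "A (h i l) (h i (Suc l)) = -1" "A (h i (Suc l)) (h i l) = -1"
        unfolding A_def h_def i by (simp_all add: mg_matrix_def)
    next
      assume "0 < length (b i)"
      then show "A (h i 0) (y i) = -1" "A (y i) (h i 0) = -1"
        unfolding A_def h_def y_def i by (simp_all add: mg_matrix_def)
    next
      fix l z assume l: "l < length (b i)" and zW: "z \<in> W0 \<union> (\<Union>j\<in>I. h j ` {..<length (b j)})"
        and zn: "z \<notin> h i ` {..<length (b i)}" and zy: "z \<noteq> y i \<or> 0 < l"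
      from zW consider (a) u where "z = Inl u" | (b) i' l' where "i' \<in> I" "l' < length (b i')" "z = h i' l'"
        unfolding W0_def by blast
      then have conj: "A (h i l) z = 0 \<and> A z (h i l) = 0"
      proof cases
        case a
        then show ?thesis using zy unfolding A_def h_def y_def i by (auto simp: mg_matrix_def)
      next
        case b
        obtain v' j' where i': "i' = (v', j')" by (cases i')
        have "(v', j') \<noteq> (v, j)" using zn b i i' by auto
        then show ?thesis using b unfolding A_def h_def i i' by (auto simp: mg_matrix_def)
      qed
      then show "A (h i l) z = 0" "A z (h i l) = 0" by auto
    next
      fix l l' assume "l < length (b i)" "l' < length (b i)" "l \<noteq> l'" "Suc l \<noteq> l'" "Suc l' \<noteq> l"
      then show "A (h i l) (h i l') = 0"
        unfolding A_def h_def i by (auto simp: mg_matrix_def)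
    qed
  qed
  have H: "dt (W0 \<union> (\<Union>i\<in>I. h i ` {..<length (b i)})) A =
      (\<Prod>i\<in>I. K (b i)) *
      dt W0 (\<lambda>u v. if u = v then A u u - (\<Sum>i\<in>{i\<in>I. y i = u}. Qd (b i) / K (b i)) else A u v)"
  proof -
    have p1: "\<forall>i\<in>I. y i \<in> W0" by (auto simp: y_def W0_def I_def)
    have p2: "\<forall>i\<in>I. inj_on (h i) {..<length (b i)}" by (auto simp: h_def inj_on_def)
    have p3: "\<forall>i\<in>I. \<forall>l<length (b i). h i l \<notin> W0" by (auto simp: h_def W0_def)
    have p4: "\<forall>i\<in>I. \<forall>j\<in>I. \<forall>l<length (b i). \<forall>l'<length (b j). h i l = h j l' \<longrightarrow> i = j"
      by (auto simp: h_def prod_eq_iff)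
    have p5: "\<forall>i\<in>I. K (b i) \<noteq> 0" using Kpos by force
    have p6: "\<forall>i\<in>I. hair_ok (W0 \<union> (\<Union>j\<in>I. h j ` {..<length (b j)})) A (y i) (h i) (b i)"
      using ok by blast
    show ?thesis using dt_hairs[OF finI finW0, of y h b A] p1 p2 p3 p4 p5 p6 by blast
  qed
  have R: "dt W0 (\<lambda>u v. if u = v then A u u - (\<Sum>i\<in>{i\<in>I. y i = u}. Qd (b i) / K (b i)) else A u v)
     = mg_det V (\<lambda>v. n v + (\<Sum>j<length (C v). p_of (C v ! j) / q_of (C v ! j))) w"
    unfolding W0_def mg_det_dt
  proof (subst dt_reindex[OF finV], simp, rule dt_cong)
    fix u v assume u: "u \<in> V" and v: "v \<in> V"
    show "(if Inl u = Inl v then A (Inl u) (Inl u) - (\<Sum>i\<in>{i\<in>I. y i = Inl u}. Qd (b i) / K (b i)) else A (Inl u) (Inl v))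
      = mg_matrix (\<lambda>v. n v + (\<Sum>j<length (C v). p_of (C v ! j) / q_of (C v ! j))) w u v"
    proof (cases "u = v")
      case True
      have fib: "(\<Sum>i\<in>{i\<in>I. y i = Inl u}. Qd (b i) / K (b i)) = (\<Sum>j<length (C u). Qd (b (u, j)) / K (b (u, j)))"
        unfolding y_def I_def using sum_fiber[OF u] by simp
      have pq: "real_of_int (C u ! j ! 0) - Qd (b (u, j)) / K (b (u, j)) = p_of (C u ! j) / q_of (C u ! j)"
        if "j < length (C u)" for j
      proof -
        have ij: "(u, j) \<in> I" using u that unfolding I_def by simp
        have p: "p_of (C u ! j) = real_of_int (C u ! j ! 0) * K (b (u, j)) - Qd (b (u, j))"
          using chain_facts(2)[of "C u ! j"] cf[OF ij] qK[of "(u, j)"] by (simp add: b_def)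
        have "K (b (u, j)) \<noteq> 0" using Kpos[OF ij] by simp
        then show ?thesis unfolding p qK[of "(u, j)", simplified] by (simp add: field_simps)
      qed
      have "A (Inl u) (Inl u) - (\<Sum>j<length (C u). Qd (b (u, j)) / K (b (u, j)))
          = n u + (\<Sum>j<length (C u). p_of (C u ! j) / q_of (C u ! j))"
        unfolding A_def by (simp add: mg_matrix_def sum_subtractf[symmetric] pq)
      then show ?thesis using True fib by (simp add: mg_matrix_def)
    next
      case False
      then show ?thesis unfolding A_def by (simp add: mg_matrix_def)
    qed
  qed
  have P: "(\<Prod>i\<in>I. K (b i)) = (\<Prod>i\<in>Sigma V (\<lambda>v. {..<length (C v)}). q_of (C (fst i) ! snd i))"
    unfolding I_def qK ..
  show ?thesis
    unfolding mg_det_dt setEq A_def[symmetric] using H R P by (simp add: mg_det_dt)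
qed



lemma tilde_result:
  fixes V :: "'v set" and n :: "'v \<Rightarrow> real" and w :: "'v \<Rightarrow> 'v \<Rightarrow> nat"
    and C :: "'v \<Rightarrow> int list list"
  assumes finV: "finite V"
    and chains: "\<And>v j. v \<in> V \<Longrightarrow> j < length (C v) \<Longrightarrow>
         C v ! j \<noteq> [] \<and> C v ! j ! 0 \<ge> 1 \<and>
         (\<forall>l. 1 \<le> l \<and> l < length (C v ! j) \<longrightarrow> C v ! j ! l \<ge> 2)"
  shows "mg_det (tilde_V V C) (tilde_mark n C) (tilde_E w) =
    (\<Prod>i\<in>Sigma V (\<lambda>v. {..<length (C v)}). - q_of (C (fst i) ! snd i) / p_of (C (fst i) ! snd i)) *
    mg_det V (\<lambda>v. n v + (\<Sum>j<length (C v). p_of (C v ! j) / q_of (C v ! j))) w"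
proof -
  define I where "I = Sigma V (\<lambda>v. {..<length (C v)})"
  define y :: "'v \<times> nat \<Rightarrow> 'v + 'v \<times> nat" where "y i = Inl (fst i)" for i
  define h :: "'v \<times> nat \<Rightarrow> nat \<Rightarrow> 'v + 'v \<times> nat" where "h i l = Inr (fst i, snd i)" for i l
  define b where "b i = [- q_of (C (fst i) ! snd i) / p_of (C (fst i) ! snd i)]" for i
  define A where "A = mg_matrix (tilde_mark n C) (tilde_E w)"
  define W0 :: "('v + 'v \<times> nat) set" where "W0 = Inl ` V"
  have finI: "finite I" unfolding I_def using finV by auto
  have finW0: "finite W0" unfolding W0_def using finV by auto
  have lb: "length (b i) = 1" for i unfolding b_def by simp
  have l1: "{..<Suc 0} = {0::nat}" by auto
  have setEq: "tilde_V V C = W0 \<union> (\<Union>i\<in>I. h i ` {..<length (b i)})"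
    unfolding tilde_V_def W0_def I_def h_def lb One_nat_def l1 by auto
  have cf: "C (fst i) ! snd i \<noteq> [] \<and> C (fst i) ! snd i ! 0 \<ge> 1 \<and>
      (\<forall>l. 1 \<le> l \<and> l < length (C (fst i) ! snd i) \<longrightarrow> C (fst i) ! snd i ! l \<ge> 2)" if "i \<in> I" for i
    using chains[of "fst i" "snd i"] that unfolding I_def by auto
  have qpos: "q_of (C (fst i) ! snd i) \<ge> 1" and ppos: "p_of (C (fst i) ! snd i) \<ge> 1" if "i \<in> I" for i
    using chain_facts(3,4)[of "C (fst i) ! snd i"] cf[OF that] by auto
  have Kb: "K (b i) = - q_of (C (fst i) ! snd i) / p_of (C (fst i) ! snd i)" for i
    unfolding b_def by simp
  have Qb: "Qd (b i) = 1" for i unfolding b_def Qd_def by simp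
  have Knz: "K (b i) \<noteq> 0" if "i \<in> I" for i
    using qpos[OF that] ppos[OF that] unfolding Kb by auto
  have ok: "hair_ok (W0 \<union> (\<Union>j\<in>I. h j ` {..<length (b j)})) A (y i) (h i) (b i)" if iI: "i \<in> I" for i
  proof -
    obtain v j where i: "i = (v, j)" by (cases i)
    show ?thesis unfolding hair_ok_def lb
    proof (intro conjI allI impI ballI)
      fix l :: nat assume "l < 1"
      then show "A (h i l) (h i l) = b i ! l"
        unfolding A_def h_def b_def i by (simp add: mg_matrix_def)
    next
      fix l :: nat assume "Suc l < 1"
      then show "A (h i l) (h i (Suc l)) = -1" "A (h i (Suc l)) (h i l) = -1" by auto
    next
      show "A (h i 0) (y i) = -1" "A (y i) (h i 0) = -1"
        unfolding A_def h_def y_def i by (simp_all add: mg_matrix_def)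
    next
      fix l z assume l: "l < (1::nat)" and zW: "z \<in> W0 \<union> (\<Union>j\<in>I. h j ` {..<1})"
        and zn: "z \<notin> h i ` {..<1}" and zy: "z \<noteq> y i \<or> 0 < l"
      have l0: "l = 0" using l by simp
      from zW consider (a) u where "z = Inl u" | (b) i' l' where "i' \<in> I" "z = h i' l'"
        unfolding W0_def by blast
      then have conj: "A (h i l) z = 0 \<and> A z (h i l) = 0"
      proof cases
        case a
        then show ?thesis using zy l0 unfolding A_def h_def y_def i by (auto simp: mg_matrix_def)
      next
        case b
        obtain v' j' where i': "i' = (v', j')" by (cases i')
        have "(v', j') \<noteq> (v, j)" using zn b i i' unfolding h_def by auto
        then show ?thesis using b unfolding A_def h_def i i' by (auto simp: mg_matrix_def)
      qed
      then show "A (h i l) z = 0" "A z (h i l) = 0" by auto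
    next
      fix l l' :: nat assume "l < 1" "l' < 1" "l \<noteq> l'"
      then show "A (h i l) (h i l') = 0" by auto
    qed
  qed
  have H: "dt (W0 \<union> (\<Union>i\<in>I. h i ` {..<length (b i)})) A =
      (\<Prod>i\<in>I. K (b i)) *
      dt W0 (\<lambda>u v. if u = v then A u u - (\<Sum>i\<in>{i\<in>I. y i = u}. Qd (b i) / K (b i)) else A u v)"
  proof -
    have p1: "\<forall>i\<in>I. y i \<in> W0" by (auto simp: y_def W0_def I_def)
    have p2: "\<forall>i\<in>I. inj_on (h i) {..<length (b i)}" by (auto simp: lb inj_on_def)
    have p3: "\<forall>i\<in>I. \<forall>l<length (b i). h i l \<notin> W0" by (auto simp: h_def W0_def)
    have p4: "\<forall>i\<in>I. \<forall>j\<in>I. \<forall>l<length (b i). \<forall>l'<length (b j). h i l = h j l' \<longrightarrow> i = j"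
      by (auto simp: h_def prod_eq_iff)
    have p5: "\<forall>i\<in>I. K (b i) \<noteq> 0" using Knz by blast
    have p6: "\<forall>i\<in>I. hair_ok (W0 \<union> (\<Union>j\<in>I. h j ` {..<length (b j)})) A (y i) (h i) (b i)"
      using ok by blast
    show ?thesis using dt_hairs[OF finI finW0, of y h b A] p1 p2 p3 p4 p5 p6 by blast
  qed
  have R: "dt W0 (\<lambda>u v. if u = v then A u u - (\<Sum>i\<in>{i\<in>I. y i = u}. Qd (b i) / K (b i)) else A u v)
     = mg_det V (\<lambda>v. n v + (\<Sum>j<length (C v). p_of (C v ! j) / q_of (C v ! j))) w"
    unfolding W0_def mg_det_dt
  proof (subst dt_reindex[OF finV], simp, rule dt_cong)
    fix u v assume u: "u \<in> V" and v: "v \<in> V"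
    show "(if Inl u = Inl v then A (Inl u) (Inl u) - (\<Sum>i\<in>{i\<in>I. y i = Inl u}. Qd (b i) / K (b i)) else A (Inl u) (Inl v))
      = mg_matrix (\<lambda>v. n v + (\<Sum>j<length (C v). p_of (C v ! j) / q_of (C v ! j))) w u v"
    proof (cases "u = v")
      case True
      have fib: "(\<Sum>i\<in>{i\<in>I. y i = Inl u}. Qd (b i) / K (b i)) = (\<Sum>j<length (C u). Qd (b (u, j)) / K (b (u, j)))"
        unfolding y_def I_def using sum_fiber[OF u] by simp
      have pq: "- (Qd (b (u, j)) / K (b (u, j))) = p_of (C u ! j) / q_of (C u ! j)"
        if "j < length (C u)" for j
      proof -
        have ij: "(u, j) \<in> I" using u that unfolding I_def by simp
        have "q_of (C u ! j) \<noteq> 0" "p_of (C u ! j) \<noteq> 0" using qpos[OF ij] ppos[OF ij] by auto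
        then show ?thesis unfolding Qb Kb by (simp add: field_simps)
      qed
      have "A (Inl u) (Inl u) - (\<Sum>j<length (C u). Qd (b (u, j)) / K (b (u, j)))
          = n u + (\<Sum>j<length (C u). p_of (C u ! j) / q_of (C u ! j))"
      proof -
        have "(\<Sum>j<length (C u). p_of (C u ! j) / q_of (C u ! j)) = (\<Sum>j<length (C u). - (Qd (b (u, j)) / K (b (u, j))))"
          using pq by (intro sum.cong) auto
        then show ?thesis unfolding A_def by (simp add: mg_matrix_def sum_negf)
      qed
      then show ?thesis using True fib by (simp add: mg_matrix_def)
    next
      case False
      then show ?thesis unfolding A_def by (simp add: mg_matrix_def)
    qed
  qed
  have P: "(\<Prod>i\<in>I. K (b i)) = (\<Prod>i\<in>Sigma V (\<lambda>v. {..<length (C v)}). - q_of (C (fst i) ! snd i) / p_of (C (fst i) ! snd i))"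
    unfolding I_def Kb ..
  show ?thesis
    unfolding mg_det_dt setEq A_def[symmetric] using H R P by (simp add: mg_det_dt)
qed

theorem theorem2p7:
  fixes V :: "'v set" and n :: "'v \<Rightarrow> real" and w :: "'v \<Rightarrow> 'v \<Rightarrow> nat"
    and C :: "'v \<Rightarrow> int list list"
  assumes finV: "finite V"
    and sym: "\<And>u v. w u v = w v u"
    and noloop: "\<And>v. w v v = 0"
    and chains: "\<And>v j. v \<in> V \<Longrightarrow> j < length (C v) \<Longrightarrow>
         C v ! j \<noteq> [] \<and> C v ! j ! 0 \<ge> 1 \<and>
         (\<forall>l. 1 \<le> l \<and> l < length (C v ! j) \<longrightarrow> C v ! j ! l \<ge> 2)"
  shows "(mg_det (hairy_V V C) (hairy_mark n C) (hairy_E w) =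
           mg_det V (\<lambda>v. n v + (\<Sum>j<length (C v). p_of (C v ! j) / q_of (C v ! j))) w
           * (\<Prod>v\<in>V. \<Prod>j<length (C v). q_of (C v ! j))) \<and>
         (mg_det (hairy_V V C) (hairy_mark n C) (hairy_E w) =
           mg_det (tilde_V V C) (tilde_mark n C) (tilde_E w)
           * (\<Prod>v\<in>V. \<Prod>j<length (C v). - p_of (C v ! j)))"
proof -
  let ?I = "Sigma V (\<lambda>v. {..<length (C v)})"
  let ?M = "mg_det V (\<lambda>v. n v + (\<Sum>j<length (C v). p_of (C v ! j) / q_of (C v ! j))) w"
  have h: "mg_det (hairy_V V C) (hairy_mark n C) (hairy_E w) = (\<Prod>i\<in>?I. q_of (C (fst i) ! snd i)) * ?M"
    by (rule hairy_result[OF finV chains])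
  have t: "mg_det (tilde_V V C) (tilde_mark n C) (tilde_E w) =
    (\<Prod>i\<in>?I. - q_of (C (fst i) ! snd i) / p_of (C (fst i) ! snd i)) * ?M"
    by (rule tilde_result[OF finV chains])
  have pq: "(\<Prod>v\<in>V. \<Prod>j<length (C v). q_of (C v ! j)) = (\<Prod>i\<in>?I. q_of (C (fst i) ! snd i))"
    by (rule prod_Sigma_split[OF finV])
  have pp: "(\<Prod>v\<in>V. \<Prod>j<length (C v). - p_of (C v ! j)) = (\<Prod>i\<in>?I. - p_of (C (fst i) ! snd i))"
    by (rule prod_Sigma_split[OF finV])
  have pnz: "p_of (C (fst i) ! snd i) \<noteq> 0" if "i \<in> ?I" for i
    using chain_facts(4)[of "C (fst i) ! snd i"] chains[of "fst i" "snd i"] that by auto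
  have comb: "(\<Prod>i\<in>?I. - q_of (C (fst i) ! snd i) / p_of (C (fst i) ! snd i)) * (\<Prod>i\<in>?I. - p_of (C (fst i) ! snd i))
      = (\<Prod>i\<in>?I. q_of (C (fst i) ! snd i))"
    unfolding prod.distrib[symmetric] using pnz by (intro prod.cong) auto
  show ?thesis
    using h t pq pp comb by (simp add: algebra_simps)
qed


end
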